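(* Consider the GTFG system with $\lambda=0$ (setting below) and the invariant set $\mathcal M_1=\{\xi_1=0,\ \xi_2=0\}\subset\mathcal P^6$, where $\xi_1=w_1^2+\varepsilon_0x_1-\mathrm i\varepsilon_1(x_1w_3-2z_1w_1)-\varepsilon_1^2r^2$, $\xi_2=w_2^2+\varepsilon_0x_2+\mathrm i\varepsilon_1(x_2w_3-2z_2w_2)-\varepsilon_1^2r^2$ (so that $K=\xi_1\xi_2$). Let $$N=\sqrt{[\varepsilon_0+\mathrm i\varepsilon_1(w_3+\mathrm i\varepsilon_1y_1)][\varepsilon_0-\mathrm i\varepsilon_1(w_3-\mathrm i\varepsilon_1y_2)]}+\varepsilon_1^2\sqrt{x_1x_2},$$ $$F=\sqrt{x_1x_2}\,w_3-\frac{x_2z_1w_1+x_1z_2w_2}{\sqrt{x_1x_2}}+\mathrm i\varepsilon_1r^2\frac{x_1-x_2}{\sqrt{x_1x_2}}.$$ Then the points of $\mathcal M_1$ have outer type "center", except for the points with $N\,F=0$, which are degenerate with respect to the whole system on $\mathcal P^6$. (Here, with $\Phi=K$, one has $C_\Phi=-4N^2F^2$.)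
   Context: Phase variables $\mathbf M,\boldsymbol\alpha,\boldsymbol\beta\in\mathbb R^3$ on $e(3,2)^*\cong\mathbb R^9$ with Lie–Poisson dynamics: a function $\Phi$ generates the vector field $\mathrm{sgrad}\,\Phi$: $\dot{\mathbf M}=\mathbf M\times\partial\Phi/\partial\mathbf M+\boldsymbol\alpha\times\partial\Phi/\partial\boldsymbol\alpha+\boldsymbol\beta\times\partial\Phi/\partial\boldsymbol\beta$, $\dot{\boldsymbol\alpha}=\boldsymbol\alpha\times\partial\Phi/\partial\mathbf M$, $\dot{\boldsymbol\beta}=\boldsymbol\beta\times\partial\Phi/\partial\mathbf M$. Constants $a>b>0$, $r^2=a^2-b^2$; phase space $\mathcal P^6=\{\boldsymbol\alpha^2=a^2,\boldsymbol\beta^2=b^2,\boldsymbol\alpha\cdot\boldsymbol\beta=0\}$. Real parameters $\varepsilon_0\ge0,\varepsilon_1,\lambda$. GTFG Hamiltonian $H=\tfrac14(M_1^2+M_2^2)+\tfrac12(M_3-\lambda)^2-\varepsilon_1[(\alpha_2M_3-\alpha_3M_2)+(\beta_3M_1-\beta_1M_3)]-\varepsilon_0(\alpha_1+\beta_2)$. Complex variables: $x_{1,2}=(\alpha_1-\beta_2)\pm\mathrm i(\alpha_2+\beta_1)$, $y_{1,2}=(\alpha_1+\beta_2)\pm\mathrm i(\alpha_2-\beta_1)$, $z_{1,2}=\alpha_3\pm\mathrm i\beta_3$, $w_{1,2}=\tfrac12(M_1\pm\mathrm iM_2)$, $w_3=M_3-\lambda$. Both square roots in $N$ are of nonnegative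 real numbers (the first radicand is $|\cdot|^2$, $x_1x_2=|x_1|^2$) and are taken nonnegative. With $\lambda=0$ the function $K=\xi_1\xi_2$ is a first integral of the GTFG system, and $\mathcal M_1=\{K=0,dK=0\}$. Outer type: for a critical subsystem $\mathcal M$ given as $\{\Phi=0,\ d\Phi=0\}$ for a first integral $\Phi$ (here $\Phi=K$), each $x\in\mathcal M$ is a zero of $\mathrm{sgrad}\,\Phi$; let $A_\Phi$ be its linearization at $x$ (a linear operator on $\mathbb R^9$). Its characteristic polynomial has the form $-\mu^7(\mu^2-C_\Phi)$, $C_\Phi=\tfrac12\operatorname{tr}(A_\Phi^2)$. The outer type of $x$ is "center" if $C_\Phi<0$, "saddle" if $C_\Phi>0$, and $x$ is degenerate if $C_\Phi=0$. *)

theory Defs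
  imports "HOL-Analysis.Analysis"
begin

text \<open>Phase variables (M, alpha, beta) in e(3,2)^* = R^9, modelled as R^3 x R^3 x R^3.\<close>
type_synonym phase = "(real^3) \<times> (real^3) \<times> (real^3)"

definition dM :: "(phase \<Rightarrow> real) \<Rightarrow> phase \<Rightarrow> real^3" where
  "dM \<Phi> p = (\<chi> i. frechet_derivative \<Phi> (at p) (axis i 1, 0, 0))"
definition dAlpha :: "(phase \<Rightarrow> real) \<Rightarrow> phase \<Rightarrow> real^3" where
  "dAlpha \<Phi> p = (\<chi> i. frechet_derivative \<Phi> (at p) (0, axis i 1, 0))"
definition dBeta :: "(phase \<Rightarrow> real) \<Rightarrow> phase \<Rightarrow> real^3" where
  "dBeta \<Phi> p = (\<chi> i. frechet_derivative \<Phi> (at p) (0, 0, axis i 1))"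

definition sgrad :: "(phase \<Rightarrow> real) \<Rightarrow> phase \<Rightarrow> phase" where
  "sgrad \<Phi> p = (case p of (M, \<alpha>, \<beta>) \<Rightarrow>
      (cross3 M (dM \<Phi> p) + cross3 \<alpha> (dAlpha \<Phi> p) + cross3 \<beta> (dBeta \<Phi> p),
       cross3 \<alpha> (dM \<Phi> p),
       cross3 \<beta> (dM \<Phi> p)))"

definition P6 :: "real \<Rightarrow> real \<Rightarrow> phase set" where
  "P6 a b = {(M, \<alpha>, \<beta>). \<alpha> \<bullet> \<alpha> = a\<^sup>2 \<and> \<beta> \<bullet> \<beta> = b\<^sup>2 \<and> \<alpha> \<bullet> \<beta> = 0}"

definition cx1 :: "phase \<Rightarrow> complex" where
  "cx1 p = (case p of (M, \<alpha>, \<beta>) \<Rightarrow> Complex (\<alpha>$1 - \<beta>$2) (\<alpha>$2 + \<beta>$1))"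
definition cx2 :: "phase \<Rightarrow> complex" where
  "cx2 p = (case p of (M, \<alpha>, \<beta>) \<Rightarrow> Complex (\<alpha>$1 - \<beta>$2) (- (\<alpha>$2 + \<beta>$1)))"
definition cy1 :: "phase \<Rightarrow> complex" where
  "cy1 p = (case p of (M, \<alpha>, \<beta>) \<Rightarrow> Complex (\<alpha>$1 + \<beta>$2) (\<alpha>$2 - \<beta>$1))"
definition cy2 :: "phase \<Rightarrow> complex" where
  "cy2 p = (case p of (M, \<alpha>, \<beta>) \<Rightarrow> Complex (\<alpha>$1 + \<beta>$2) (- (\<alpha>$2 - \<beta>$1)))"
definition cz1 :: "phase \<Rightarrow> complex" where
  "cz1 p = (case p of (M, \<alpha>, \<beta>) \<Rightarrow> Complex (\<alpha>$3) (\<beta>$3))"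
definition cz2 :: "phase \<Rightarrow> complex" where
  "cz2 p = (case p of (M, \<alpha>, \<beta>) \<Rightarrow> Complex (\<alpha>$3) (- \<beta>$3))"
definition cw1 :: "phase \<Rightarrow> complex" where
  "cw1 p = (case p of (M, \<alpha>, \<beta>) \<Rightarrow> Complex (M$1 / 2) (M$2 / 2))"
definition cw2 :: "phase \<Rightarrow> complex" where
  "cw2 p = (case p of (M, \<alpha>, \<beta>) \<Rightarrow> Complex (M$1 / 2) (- M$2 / 2))"
definition cw3 :: "real \<Rightarrow> phase \<Rightarrow> complex" where
  "cw3 lam p = (case p of (M, \<alpha>, \<beta>) \<Rightarrow> complex_of_real (M$3 - lam))"

definition rsq :: "real \<Rightarrow> real \<Rightarrow> real" where
  "rsq a b = a\<^sup>2 - b\<^sup>2"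

definition xi1 :: "real \<Rightarrow> real \<Rightarrow> real \<Rightarrow> real \<Rightarrow> real \<Rightarrow> phase \<Rightarrow> complex" where
  "xi1 a b \<epsilon>0 \<epsilon>1 lam p = (cw1 p)\<^sup>2 + of_real \<epsilon>0 * cx1 p
     - \<i> * of_real \<epsilon>1 * (cx1 p * cw3 lam p - 2 * cz1 p * cw1 p) - of_real (\<epsilon>1\<^sup>2 * rsq a b)"
definition xi2 :: "real \<Rightarrow> real \<Rightarrow> real \<Rightarrow> real \<Rightarrow> real \<Rightarrow> phase \<Rightarrow> complex" where
  "xi2 a b \<epsilon>0 \<epsilon>1 lam p = (cw2 p)\<^sup>2 + of_real \<epsilon>0 * cx2 p
     + \<i> * of_real \<epsilon>1 * (cx2 p * cw3 lam p - 2 * cz2 p * cw2 p) - of_real (\<epsilon>1\<^sup>2 * rsq a b)"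

text \<open>K = xi1 * xi2 (a real-valued function on R^9; we take the real part of the
  complex product, which has zero imaginary part since xi2 is the conjugate of xi1).\<close>
definition Kfun :: "real \<Rightarrow> real \<Rightarrow> real \<Rightarrow> real \<Rightarrow> real \<Rightarrow> phase \<Rightarrow> real" where
  "Kfun a b \<epsilon>0 \<epsilon>1 lam p = Re (xi1 a b \<epsilon>0 \<epsilon>1 lam p * xi2 a b \<epsilon>0 \<epsilon>1 lam p)"

definition M1set :: "real \<Rightarrow> real \<Rightarrow> real \<Rightarrow> real \<Rightarrow> real \<Rightarrow> phase set" where
  "M1set a b \<epsilon>0 \<epsilon>1 lam = {p \<in> P6 a b. xi1 a b \<epsilon>0 \<epsilon>1 lam p = 0 \<and> xi2 a b \<epsilon>0 \<epsilon>1 lam p = 0}"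

definition trace_op :: "('a::euclidean_space \<Rightarrow> 'a) \<Rightarrow> real" where
  "trace_op A = (\<Sum>e\<in>Basis. A e \<bullet> e)"

definition linz :: "(phase \<Rightarrow> real) \<Rightarrow> phase \<Rightarrow> phase \<Rightarrow> phase" where
  "linz \<Phi> x = frechet_derivative (sgrad \<Phi>) (at x)"
definition Cinv :: "(phase \<Rightarrow> real) \<Rightarrow> phase \<Rightarrow> real" where
  "Cinv \<Phi> x = trace_op (linz \<Phi> x \<circ> linz \<Phi> x) / 2"

definition outer_center :: "(phase \<Rightarrow> real) \<Rightarrow> phase \<Rightarrow> bool" where
  "outer_center \<Phi> x \<longleftrightarrow> Cinv \<Phi> x < 0"
definition outer_saddle :: "(phase \<Rightarrow> real) \<Rightarrow> phase \<Rightarrow> bool" where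
  "outer_saddle \<Phi> x \<longleftrightarrow> Cinv \<Phi> x > 0"
definition outer_degenerate :: "(phase \<Rightarrow> real) \<Rightarrow> phase \<Rightarrow> bool" where
  "outer_degenerate \<Phi> x \<longleftrightarrow> Cinv \<Phi> x = 0"

text \<open>The functions N and F (square roots of nonnegative reals, taken nonnegative;
  the radicands are real, so we take their real parts).\<close>
definition Nfun :: "real \<Rightarrow> real \<Rightarrow> real \<Rightarrow> phase \<Rightarrow> complex" where
  "Nfun \<epsilon>0 \<epsilon>1 lam p =
     of_real (sqrt (Re ((of_real \<epsilon>0 + \<i> * of_real \<epsilon>1 * (cw3 lam p + \<i> * of_real \<epsilon>1 * cy1 p))
                      * (of_real \<epsilon>0 - \<i> * of_real \<epsilon>1 * (cw3 lam p - \<i> * of_real \<epsilon>1 * cy2 p)))))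
     + of_real (\<epsilon>1\<^sup>2) * of_real (sqrt (Re (cx1 p * cx2 p)))"
definition Ffun :: "real \<Rightarrow> real \<Rightarrow> real \<Rightarrow> real \<Rightarrow> phase \<Rightarrow> complex" where
  "Ffun a b \<epsilon>1 lam p =
     (let s = complex_of_real (sqrt (Re (cx1 p * cx2 p))) in
      s * cw3 lam p - (cx2 p * cz1 p * cw1 p + cx1 p * cz2 p * cw2 p) / s
      + \<i> * of_real \<epsilon>1 * of_real (rsq a b) * (cx1 p - cx2 p) / s)"

end

theory Submission
  imports Defs
begin

definition uu :: "real \<Rightarrow> real \<Rightarrow> real \<Rightarrow> phase \<Rightarrow> real" where
 "uu e0 e1 rr p = (1/4)*((fst p$1)^2 - (fst p$2)^2) + e0*(fst (snd p)$1 - snd (snd p)$2)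
   + e1*fst p$3*(fst (snd p)$2 + snd (snd p)$1) - e1*(fst (snd p)$3*fst p$2 + snd (snd p)$3*fst p$1) - e1^2*rr"
definition vv :: "real \<Rightarrow> real \<Rightarrow> phase \<Rightarrow> real" where
 "vv e0 e1 p = (1/2)*(fst p$1*fst p$2) + e0*(fst (snd p)$2 + snd (snd p)$1)
   - e1*fst p$3*(fst (snd p)$1 - snd (snd p)$2) + e1*(fst (snd p)$3*fst p$1 - snd (snd p)$3*fst p$2)"

lemma xi1_eq: "xi1 a b e0 e1 0 p = Complex (uu e0 e1 (rsq a b) p) (vv e0 e1 p)"
  apply (cases p)
  apply (simp add: xi1_def uu_def vv_def cx1_def cw1_def cw3_def cz1_def complex_eq_iff power2_eq_square rsq_def)
  apply (simp add: algebra_simps)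
  apply (simp add: field_simps)
  done

lemma xi2_eq: "xi2 a b e0 e1 0 p = Complex (uu e0 e1 (rsq a b) p) (- vv e0 e1 p)"
  apply (cases p)
  apply (simp add: xi2_def uu_def vv_def cx2_def cw2_def cw3_def cz2_def complex_eq_iff power2_eq_square rsq_def)
  apply (simp add: algebra_simps)
  apply (simp add: field_simps)
  done

lemma K_eq: "Kfun a b e0 e1 0 p = (uu e0 e1 (rsq a b) p)^2 + (vv e0 e1 p)^2"
  by (simp add: Kfun_def xi1_eq xi2_eq power2_eq_square)

abbreviation ax :: "3 \<Rightarrow> real^3" where "ax i \<equiv> axis i 1"

definition gu :: "real \<Rightarrow> real \<Rightarrow> phase \<Rightarrow> phase" where
 "gu e0 e1 p = ((fst p$1/2 - e1* snd (snd p)$3) *\<^sub>R ax 1 + (-fst p$2/2 - e1*fst (snd p)$3) *\<^sub>R ax 2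
                 + (e1*(fst (snd p)$2 + snd (snd p)$1)) *\<^sub>R ax 3,
               e0 *\<^sub>R ax 1 + (e1*fst p$3) *\<^sub>R ax 2 + (-e1*fst p$2) *\<^sub>R ax 3,
               (e1*fst p$3) *\<^sub>R ax 1 + (-e0) *\<^sub>R ax 2 + (-e1*fst p$1) *\<^sub>R ax 3)"
definition gv :: "real \<Rightarrow> real \<Rightarrow> phase \<Rightarrow> phase" where
 "gv e0 e1 p = ((fst p$2/2 + e1*fst (snd p)$3) *\<^sub>R ax 1 + (fst p$1/2 - e1* snd (snd p)$3) *\<^sub>R ax 2
                 + (-e1*(fst (snd p)$1 - snd (snd p)$2)) *\<^sub>R ax 3,
               (-e1*fst p$3) *\<^sub>R ax 1 + e0 *\<^sub>R ax 2 + (e1*fst p$1) *\<^sub>R ax 3,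
               e0 *\<^sub>R ax 1 + (e1*fst p$3) *\<^sub>R ax 2 + (-e1*fst p$2) *\<^sub>R ax 3)"

lemma inner_gu: "gu e0 e1 p \<bullet> h = (fst p$1/2 - e1* snd (snd p)$3) * fst h$1 + (-fst p$2/2 - e1*fst (snd p)$3) * fst h$2
   + (e1*(fst (snd p)$2 + snd (snd p)$1)) * fst h$3
   + e0 * fst (snd h)$1 + (e1*fst p$3) * fst (snd h)$2 + (-e1*fst p$2) * fst (snd h)$3
   + (e1*fst p$3) * snd (snd h)$1 + (-e0) * snd (snd h)$2 + (-e1*fst p$1) * snd (snd h)$3"
  by (simp add: gu_def inner_prod_def inner_add_left inner_axis' algebra_simps)

lemma inner_gv: "gv e0 e1 p \<bullet> h = (fst p$2/2 + e1*fst (snd p)$3) * fst h$1 + (fst p$1/2 - e1* snd (snd p)$3) * fst h$2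
   + (-e1*(fst (snd p)$1 - snd (snd p)$2)) * fst h$3
   + (-e1*fst p$3) * fst (snd h)$1 + e0 * fst (snd h)$2 + (e1*fst p$1) * fst (snd h)$3
   + e0 * snd (snd h)$1 + (e1*fst p$3) * snd (snd h)$2 + (-e1*fst p$2) * snd (snd h)$3"
  by (simp add: gv_def inner_prod_def inner_add_left inner_axis' algebra_simps)

lemma hd_nth[derivative_intros]:
  "((\<lambda>p::phase. fst p $ i) has_derivative (\<lambda>h. fst h $ i)) F"
  "((\<lambda>p::phase. fst (snd p) $ i) has_derivative (\<lambda>h. fst (snd h) $ i)) F"
  "((\<lambda>p::phase. snd (snd p) $ i) has_derivative (\<lambda>h. snd (snd h) $ i)) F"
  by (auto intro!: bounded_linear_imp_has_derivative bounded_linear_compose[OF bounded_linear_vec_nth]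
      bounded_linear_fst bounded_linear_snd bounded_linear_compose[OF bounded_linear_fst]
      bounded_linear_compose[OF bounded_linear_snd])

lemma uu_deriv: "(uu e0 e1 rr has_derivative (\<lambda>h. gu e0 e1 p \<bullet> h)) (at p)"
  unfolding uu_def[abs_def] inner_gu
  apply (rule has_derivative_eq_rhs)
   apply (rule derivative_intros)+
  apply (rule ext) apply (simp add: power2_eq_square algebra_simps)
  done

lemma vv_deriv: "(vv e0 e1 has_derivative (\<lambda>h. gv e0 e1 p \<bullet> h)) (at p)"
  unfolding vv_def[abs_def] inner_gv
  apply (rule has_derivative_eq_rhs)
   apply (rule derivative_intros)+
  apply (rule ext) apply (simp add: power2_eq_square algebra_simps)
  done

lemma K_fun: "Kfun a b e0 e1 0 = (\<lambda>p. (uu e0 e1 (rsq a b) p)^2 + (vv e0 e1 p)^2)"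
  by (rule ext) (simp add: K_eq)

lemma K_deriv: "(Kfun a b e0 e1 0 has_derivative
   (\<lambda>h. 2 * uu e0 e1 (rsq a b) p * (gu e0 e1 p \<bullet> h) + 2 * vv e0 e1 p * (gv e0 e1 p \<bullet> h))) (at p)"
  unfolding K_fun
  apply (rule has_derivative_eq_rhs)
   apply (rule derivative_intros uu_deriv vv_deriv)+
  apply (simp add: power2_eq_square algebra_simps)
  done

lemma K_frechet: "frechet_derivative (Kfun a b e0 e1 0) (at p) =
   (\<lambda>h. 2 * uu e0 e1 (rsq a b) p * (gu e0 e1 p \<bullet> h) + 2 * vv e0 e1 p * (gv e0 e1 p \<bullet> h))"
  by (rule frechet_derivative_at[OF K_deriv, symmetric])

definition SS :: "phase \<Rightarrow> phase \<Rightarrow> phase" where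
 "SS p g = (cross3 (fst p) (fst g) + cross3 (fst (snd p)) (fst (snd g)) + cross3 (snd (snd p)) (snd (snd g)),
            cross3 (fst (snd p)) (fst g), cross3 (snd (snd p)) (fst g))"

lemma inner_axis_prod1: "(x::phase) \<bullet> (axis i 1, 0, 0) = fst x $ i"
  by (simp add: inner_prod_def inner_axis)
lemma inner_axis_prod2: "(x::phase) \<bullet> (0, axis i 1, 0) = fst (snd x) $ i"
  by (simp add: inner_prod_def inner_axis)
lemma inner_axis_prod3: "(x::phase) \<bullet> (0, 0, axis i 1) = snd (snd x) $ i"
  by (simp add: inner_prod_def inner_axis)

lemma sgrad_SS: "sgrad \<Phi> p = SS p (dM \<Phi> p, dAlpha \<Phi> p, dBeta \<Phi> p)"
  by (cases p) (simp add: sgrad_def SS_def)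

lemma SS_lin: "SS p (c *\<^sub>R g + d *\<^sub>R h) = c *\<^sub>R SS p g + d *\<^sub>R SS p h"
  by (simp add: SS_def cross_add_right cross_mult_right prod_eq_iff algebra_simps)

lemma dm_test: "dM (Kfun a b e0 e1 0) p = (2 * uu e0 e1 (rsq a b) p) *\<^sub>R fst (gu e0 e1 p) + (2 * vv e0 e1 p) *\<^sub>R fst (gv e0 e1 p)"
  unfolding dM_def K_frechet inner_axis_prod1
  by (simp add: vec_eq_iff)
lemma da_test: "dAlpha (Kfun a b e0 e1 0) p = (2 * uu e0 e1 (rsq a b) p) *\<^sub>R fst (snd (gu e0 e1 p)) + (2 * vv e0 e1 p) *\<^sub>R fst (snd (gv e0 e1 p))"
  unfolding dAlpha_def K_frechet inner_axis_prod2
  by (simp add: vec_eq_iff)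
lemma db_test: "dBeta (Kfun a b e0 e1 0) p = (2 * uu e0 e1 (rsq a b) p) *\<^sub>R snd (snd (gu e0 e1 p)) + (2 * vv e0 e1 p) *\<^sub>R snd (snd (gv e0 e1 p))"
  unfolding dBeta_def K_frechet inner_axis_prod3
  by (simp add: vec_eq_iff)
lemma g_test: "(dM (Kfun a b e0 e1 0) p, dAlpha (Kfun a b e0 e1 0) p, dBeta (Kfun a b e0 e1 0) p)
     = (2 * uu e0 e1 (rsq a b) p) *\<^sub>R gu e0 e1 p + (2 * vv e0 e1 p) *\<^sub>R gv e0 e1 p"
  unfolding dm_test da_test db_test by (simp add: prod_eq_iff)
lemma sgrad_K: "sgrad (Kfun a b e0 e1 0) p =
   (2 * uu e0 e1 (rsq a b) p) *\<^sub>R SS p (gu e0 e1 p) + (2 * vv e0 e1 p) *\<^sub>R SS p (gv e0 e1 p)"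
  unfolding sgrad_SS g_test SS_lin ..

lemma bb_cross: "bounded_bilinear cross3"
  using bilinear_cross bilinear_conv_bounded_bilinear by blast

lemmas cross_deriv[derivative_intros] = bounded_bilinear.FDERIV[OF bb_cross]

lemma hd_comp[derivative_intros]:
  "((\<lambda>p::phase. fst p) has_derivative (\<lambda>h. fst h)) F"
  "((\<lambda>p::phase. fst (snd p)) has_derivative (\<lambda>h. fst (snd h))) F"
  "((\<lambda>p::phase. snd (snd p)) has_derivative (\<lambda>h. snd (snd h))) F"
  by (auto intro!: bounded_linear_imp_has_derivative 
      bounded_linear_fst bounded_linear_snd bounded_linear_compose[OF bounded_linear_fst]
      bounded_linear_compose[OF bounded_linear_snd])

lemma two_real_nz: "(2::real) \<noteq> 0" by simp

lemma Xu_diff: "\<exists>D. ((\<lambda>p. SS p (gu e0 e1 p)) has_derivative D) (at x)"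
  unfolding SS_def gu_def fst_conv snd_conv
  apply (rule exI)
  apply (rule derivative_intros two_real_nz)+
  done

lemma Xv_diff: "\<exists>D. ((\<lambda>p. SS p (gv e0 e1 p)) has_derivative D) (at x)"
  unfolding SS_def gv_def fst_conv snd_conv
  apply (rule exI)
  apply (rule derivative_intros two_real_nz)+
  done

lemma sgrad_deriv:
  assumes "uu e0 e1 (rsq a b) x = 0" "vv e0 e1 x = 0"
  shows "(sgrad (Kfun a b e0 e1 0) has_derivative
     (\<lambda>h. (2 * (gu e0 e1 x \<bullet> h)) *\<^sub>R SS x (gu e0 e1 x) + (2 * (gv e0 e1 x \<bullet> h)) *\<^sub>R SS x (gv e0 e1 x))) (at x)"
proof -
  obtain Du where Du: "((\<lambda>p. SS p (gu e0 e1 p)) has_derivative Du) (at x)" using Xu_diff by blast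
  obtain Dv where Dv: "((\<lambda>p. SS p (gv e0 e1 p)) has_derivative Dv) (at x)" using Xv_diff by blast
  have e: "sgrad (Kfun a b e0 e1 0) = (\<lambda>p. (2 * uu e0 e1 (rsq a b) p) *\<^sub>R SS p (gu e0 e1 p) + (2 * vv e0 e1 p) *\<^sub>R SS p (gv e0 e1 p))"
    by (rule ext) (simp add: sgrad_K)
  show ?thesis unfolding e
    apply (rule has_derivative_eq_rhs)
     apply (rule has_derivative_add bounded_bilinear.FDERIV[OF bounded_bilinear_scaleR] uu_deriv vv_deriv Du Dv derivative_intros)+
    using assms by simp
qed

lemma linz_K:
  assumes "uu e0 e1 (rsq a b) x = 0" "vv e0 e1 x = 0"
  shows "linz (Kfun a b e0 e1 0) x =
     (\<lambda>h. (2 * (gu e0 e1 x \<bullet> h)) *\<^sub>R SS x (gu e0 e1 x) + (2 * (gv e0 e1 x \<bullet> h)) *\<^sub>R SS x (gv e0 e1 x))"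
  unfolding linz_def by (rule frechet_derivative_at[OF sgrad_deriv[OF assms], symmetric])

lemma trace_rank2:
  fixes g1 g2 X1 X2 :: phase
  shows "trace_op ((\<lambda>h. (2 * (g1 \<bullet> h)) *\<^sub>R X1 + (2 * (g2 \<bullet> h)) *\<^sub>R X2) \<circ>
                   (\<lambda>h. (2 * (g1 \<bullet> h)) *\<^sub>R X1 + (2 * (g2 \<bullet> h)) *\<^sub>R X2))
     = 4 * ((g1 \<bullet> X1)^2 + 2 * (g1 \<bullet> X2) * (g2 \<bullet> X1) + (g2 \<bullet> X2)^2)"
proof -
  have pt: "((\<lambda>h. (2 * (g1 \<bullet> h)) *\<^sub>R X1 + (2 * (g2 \<bullet> h)) *\<^sub>R X2) \<circ>
                   (\<lambda>h. (2 * (g1 \<bullet> h)) *\<^sub>R X1 + (2 * (g2 \<bullet> h)) *\<^sub>R X2)) e \<bullet> e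
     = (g1 \<bullet> e) * (X1 \<bullet> e) * (4 * (g1 \<bullet> X1)) + (g2 \<bullet> e) * (X1 \<bullet> e) * (4 * (g1 \<bullet> X2))
       + (g1 \<bullet> e) * (X2 \<bullet> e) * (4 * (g2 \<bullet> X1)) + (g2 \<bullet> e) * (X2 \<bullet> e) * (4 * (g2 \<bullet> X2))" for e
    by (simp add: inner_add_left inner_add_right algebra_simps)
  have s: "(\<Sum>e\<in>Basis. (x \<bullet> e) * (y \<bullet> e) * c) = (x \<bullet> y) * c" for x y :: phase and c
    by (simp add: euclidean_inner[of x y] sum_distrib_right)
  show ?thesis
    unfolding trace_op_def pt sum.distrib s
    by (simp add: power2_eq_square algebra_simps)
qed

lemma SS_antisym: "h \<bullet> SS p g = - (g \<bullet> SS p h)"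
  by (simp add: SS_def inner_prod_def inner_add_right cross3_def inner_vec_def sum_3 algebra_simps)


lemma key_ident:
  fixes m1 m2 m3 a1 a2 a3 b1 b2 b3 e0 e1 :: real
  shows "((-1)*m3*b3^2*e1^2 + (-1)*m3*b2^2*e1^2 + (-1)*m3*b1^2*e1^2 + (-1)*m3*a3^2*e1^2 + (-2)*m3*a2*b1*e1^2 + (-1)*m3*a2^2*e1^2 + (2)*m3*a1*b2*e1^2 + (-1)*m3*a1^2*e1^2 + (1)*m2*b3*e0 + (2)*m2*a3*b1*e1^2 + (-2)*m2*a1*b3*e1^2 + (1)*m2^2*b1*e1 + (1/4)*m2^2*m3 + (1)*m1*a3*e0 + (-2)*m1*a3*b2*e1^2 + (2)*m1*a2*b3*e1^2 + (-1)*m1*m2*b2*e1 + (1)*m1*m2*a1*e1 + (-1)*m1^2*a2*e1 + (1/4)*m1^2*m3)*((a1-b2)^2+(a2+b1)^2) - ((1)*b3^2*e1^2 + (1)*b2^2*e1^2 + (1)*b1^2*e1^2 + (1)*a3^2*e1^2 + (2)*a2*b1*e1^2 + (1)*a2^2*e1^2 + (-2)*a1*b2*e1^2 + (1)*a1^2*e1^2 + (1)*m2*a3*e1 + (1/4)*m2^2 + (-1)*m1*b3*e1 + (1/4)*m1^2)*((2)*b1*b3^2*e1 + (2)*b1*b2^2*e1 + (2)*b1^3*e1 + (-2)*a3^2*b1*e1 + (2)*a2*b3^2*e1 + (2)*a2*b2^2*e1 + (2)*a2*b1^2*e1 + (-2)*a2*a3^2*e1 + (-2)*a2^2*b1*e1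 + (-2)*a2^3*e1 + (-2)*a1^2*b1*e1 + (-2)*a1^2*a2*e1 + (1)*m3*b2^2 + (1)*m3*b1^2 + (2)*m3*a2*b1 + (1)*m3*a2^2 + (-2)*m3*a1*b2 + (1)*m3*a1^2 + (-1)*m2*b2*b3 + (-1)*m2*a3*b1 + (-1)*m2*a2*a3 + (1)*m2*a1*b3 + (-1)*m1*b1*b3 + (1)*m1*a3*b2 + (-1)*m1*a2*b3 + (-1)*m1*a1*a3) =
     (((1)*m2*b3 + (1)*m1*a3)*(a1-b2) + ((-2)*b3^2*e1 + (-2)*b2^2*e1 + (-2)*b1^2*e1 + (-2)*a3^2*e1 + (-4)*a2*b1*e1 + (-2)*a2^2*e1 + (4)*a1*b2*e1 + (-2)*a1^2*e1 + (-1)*m2*a3 + (1)*m1*b3)*(a2+b1))*((1/4)*(m1^2 - m2^2) + e0*(a1-b2) + e1*m3*(a2+b1) - e1*(a3*m2 + b3*m1) - e1^2*(a1^2+a2^2+a3^2-b1^2-b2^2-b3^2)) + (((1)*m2*b3 + (1)*m1*a3)*(a2+b1) - ((-2)*b3^2*e1 + (-2)*b2^2*e1 + (-2)*b1^2*e1 + (-2)*a3^2*e1 + (-4)*a2*b1*e1 + (-2)*a2^2*e1 + (4)*a1*b2*e1 + (-2)*a1^2*e1 + (-1)*m2*a3 + (1)*m1*b3)*(a1-b2))*((1/2)*(m1*m2) + e0*(a2+b1) - e1*m3*(a1-b2) + e1*(a3*m1 - b3*m2)) + ((-2)*m2*b1*b3*e1^2 + (-2)*m2*a3*b2*e1^2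 + (-2)*m2*a2*b3*e1^2 + (2)*m2*a1*a3*e1^2 + (-1)*m2^2*b2*e1 + (1)*m2^2*a1*e1 + (2)*m1*b2*b3*e1^2 + (-2)*m1*a3*b1*e1^2 + (-2)*m1*a2*a3*e1^2 + (-2)*m1*a1*b3*e1^2 + (-1)*m1^2*b2*e1 + (1)*m1^2*a1*e1)*(a1*b1+a2*b2+a3*b3)"
  by algebra

lemma key_alg:
  fixes m1 m2 m3 a1 a2 a3 b1 b2 b3 e0 e1 :: real
  assumes hu: "(1/4)*(m1^2 - m2^2) + e0*(a1-b2) + e1*m3*(a2+b1) - e1*(a3*m2 + b3*m1) - e1^2*(a1^2+a2^2+a3^2-b1^2-b2^2-b3^2) = 0"
    and hv: "(1/2)*(m1*m2) + e0*(a2+b1) - e1*m3*(a1-b2) + e1*(a3*m1 - b3*m2) = 0"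
    and hab: "(a1*b1+a2*b2+a3*b3) = 0"
  shows "(-1)*m3*b3^2*e1^2 + (-1)*m3*b2^2*e1^2 + (-1)*m3*b1^2*e1^2 + (-1)*m3*a3^2*e1^2 + (-2)*m3*a2*b1*e1^2 + (-1)*m3*a2^2*e1^2 + (2)*m3*a1*b2*e1^2 + (-1)*m3*a1^2*e1^2 + (1)*m2*b3*e0 + (2)*m2*a3*b1*e1^2 + (-2)*m2*a1*b3*e1^2 + (1)*m2^2*b1*e1 + (1/4)*m2^2*m3 + (1)*m1*a3*e0 + (-2)*m1*a3*b2*e1^2 + (2)*m1*a2*b3*e1^2 + (-1)*m1*m2*b2*e1 + (1)*m1*m2*a1*e1 + (-1)*m1^2*a2*e1 + (1/4)*m1^2*m3 = (sqrt ((e0 - e1^2*(a1+b2))^2 + (e1*m3 - e1^2*(a2-b1))^2) + e1^2 * sqrt ((a1-b2)^2+(a2+b1)^2)) * (((2)*b1*b3^2*e1 + (2)*b1*b2^2*e1 + (2)*b1^3*e1 + (-2)*a3^2*b1*e1 + (2)*a2*b3^2*e1 + (2)*a2*b2^2*e1 + (2)*a2*b1^2*e1 + (-2)*a2*a3^2*e1 + (-2)*a2^2*b1*e1 + (-2)*a2^3*e1 + (-2)*a1^2*b1*e1 + (-2)*a1^2*a2*e1 + (1)*m3*b2^2 + (1)*m3*b1^2 + (2)*m3*a2*b1 + (1)*m3*a2^2 + (-2)*m3*a1*b2 + (1)*m3*a1^2 + (-1)*m2*b2*b3 + (-1)*m2*a3*b1 + (-1)*m2*a2*a3 + (1)*m2*a1*b3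 + (-1)*m1*b1*b3 + (1)*m1*a3*b2 + (-1)*m1*a2*b3 + (-1)*m1*a1*a3) / sqrt ((a1-b2)^2+(a2+b1)^2))"
proof -
  define A where "A = (a1-b2)"
  define B where "B = (a2+b1)"
  define c where "c = (m1/2 - e1*b3)"
  define d where "d = (m2/2 + e1*a3)"
  define qr where "qr = (e0 - e1^2*(a1+b2))"
  define qi where "qi = (e1*m3 - e1^2*(a2-b1))"
  define s2 where "s2 = ((a1-b2)^2+(a2+b1)^2)"
  define PP where "PP = (-1)*m3*b3^2*e1^2 + (-1)*m3*b2^2*e1^2 + (-1)*m3*b1^2*e1^2 + (-1)*m3*a3^2*e1^2 + (-2)*m3*a2*b1*e1^2 + (-1)*m3*a2^2*e1^2 + (2)*m3*a1*b2*e1^2 + (-1)*m3*a1^2*e1^2 + (1)*m2*b3*e0 + (2)*m2*a3*b1*e1^2 + (-2)*m2*a1*b3*e1^2 + (1)*m2^2*b1*e1 + (1/4)*m2^2*m3 + (1)*m1*a3*e0 + (-2)*m1*a3*b2*e1^2 + (2)*m1*a2*b3*e1^2 + (-1)*m1*m2*b2*e1 + (1)*m1*m2*a1*e1 + (-1)*m1^2*a2*e1 + (1/4)*m1^2*m3"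
  define G where "G = (2)*b1*b3^2*e1 + (2)*b1*b2^2*e1 + (2)*b1^3*e1 + (-2)*a3^2*b1*e1 + (2)*a2*b3^2*e1 + (2)*a2*b2^2*e1 + (2)*a2*b1^2*e1 + (-2)*a2*a3^2*e1 + (-2)*a2^2*b1*e1 + (-2)*a2^3*e1 + (-2)*a1^2*b1*e1 + (-2)*a1^2*a2*e1 + (1)*m3*b2^2 + (1)*m3*b1^2 + (2)*m3*a2*b1 + (1)*m3*a2^2 + (-2)*m3*a1*b2 + (1)*m3*a1^2 + (-1)*m2*b2*b3 + (-1)*m2*a3*b1 + (-1)*m2*a2*a3 + (1)*m2*a1*b3 + (-1)*m1*b1*b3 + (1)*m1*a3*b2 + (-1)*m1*a2*b3 + (-1)*m1*a1*a3"
  define T where "T = (1)*b3^2*e1^2 + (1)*b2^2*e1^2 + (1)*b1^2*e1^2 + (1)*a3^2*e1^2 + (2)*a2*b1*e1^2 + (1)*a2^2*e1^2 + (-2)*a1*b2*e1^2 + (1)*a1^2*e1^2 + (1)*m2*a3*e1 + (1/4)*m2^2 + (-1)*m1*b3*e1 + (1/4)*m1^2"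
  have E1: "A*qr + B*qi = -(c^2-d^2)"
  proof -
    have "(1/4)*(m1^2 - m2^2) + e0*(a1-b2) + e1*m3*(a2+b1) - e1*(a3*m2 + b3*m1) - e1^2*(a1^2+a2^2+a3^2-b1^2-b2^2-b3^2) = c^2-d^2 + A*qr + B*qi" unfolding A_def B_def c_def d_def qr_def qi_def by (simp add: power2_eq_square algebra_simps)
    then show ?thesis using hu by linarith
  qed
  have E2: "B*qr - A*qi = -(2*c*d)"
  proof -
    have "(1/2)*(m1*m2) + e0*(a2+b1) - e1*m3*(a1-b2) + e1*(a3*m1 - b3*m2) = 2*c*d + B*qr - A*qi + 2*e1^2*(a1*b1+a2*b2+a3*b3)" unfolding A_def B_def c_def d_def qr_def qi_def by (simp add: power2_eq_square algebra_simps)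
    then show ?thesis using hv hab by simp
  qed
  have s2AB: "s2 = A^2 + B^2" unfolding s2_def A_def B_def ..
  have R1: "(qr^2+qi^2)* s2 = (c^2+d^2)^2"
  proof -
    have "(qr^2+qi^2)* s2 = (A*qr + B*qi)^2 + (B*qr - A*qi)^2" unfolding s2AB by (simp add: power2_eq_square algebra_simps)
    also have "\<dots> = (c^2+d^2)^2" unfolding E1 E2 by (simp add: power2_eq_square algebra_simps)
    finally show ?thesis .
  qed
  have sq: "sqrt (qr^2+qi^2) * sqrt s2 = c^2+d^2"
    by (simp add: real_sqrt_mult[symmetric] R1)
  have id: "PP* s2 - T*G = 0"
    using key_ident[where ?m1.0=m1 and ?m2.0=m2 and ?m3.0=m3 and ?a1.0=a1 and ?a2.0=a2 and ?a3.0=a3 and ?b1.0=b1 and ?b2.0=b2 and ?b3.0=b3 and ?e0.0=e0 and ?e1.0=e1] unfolding hu hv hab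
    unfolding PP_def s2_def T_def G_def by simp
  have T_eq: "T = c^2 + d^2 + e1^2* s2"
    unfolding T_def c_def d_def s2_def by (simp add: power2_eq_square algebra_simps)
  show ?thesis
  proof (cases "s2 = 0")
    case True
    then have A0: "A = 0" and B0: "B = 0" using s2AB by (auto simp: add_nonneg_eq_0_iff)
    then have "c^2 - d^2 = 0" "c*d = 0" using E1 E2 by auto
    then have c0: "c = 0" and d0: "d = 0"
      by (metis diff_self mult_zero_left power2_eq_square right_minus_eq no_zero_divisors)+
    have m1e: "m1 = 2*e1*b3" using c0 unfolding c_def by simp
    have m2e: "m2 = -2*e1*a3" using d0 unfolding d_def by simp
    have b2e: "b2 = a1" using A0 unfolding A_def by simp
    have b1e: "b1 = -a2" using B0 unfolding B_def by simp
    have "PP = 0" unfolding PP_def m1e m2e b2e b1e by (simp add: power2_eq_square algebra_simps)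
    then show ?thesis using True unfolding PP_def[symmetric] G_def[symmetric] s2_def[symmetric] qr_def[symmetric] qi_def[symmetric] by simp
  next
    case False
    then have s2p: "s2 > 0" using s2AB by (simp add: add_pos_nonneg sum_power2_gt_zero_iff A_def B_def)
    have ss: "sqrt s2 * sqrt s2 = s2" using s2p by simp
    have sn: "sqrt s2 \<noteq> 0" using s2p by simp
    have "(sqrt (qr^2+qi^2) + e1^2 * sqrt s2) * (G / sqrt s2)
        = (sqrt (qr^2+qi^2) * sqrt s2 + e1^2 * (sqrt s2 * sqrt s2)) * G / (sqrt s2 * sqrt s2)"
      using sn by (simp add: field_simps)
    also have "\<dots> = T*G/s2" unfolding sq ss T_eq ..
    also have "\<dots> = PP" using id s2p by (simp add: field_simps)
    finally show ?thesis unfolding PP_def[symmetric] G_def[symmetric] s2_def[symmetric] qr_def[symmetric] qi_def[symmetric] by simp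
  qed
qed

lemma gu_c:
  "fst (gu e0 e1 p) $ 1 = fst p$1/2 - e1 * snd (snd p)$3"
  "fst (gu e0 e1 p) $ 2 = -fst p$2/2 - e1*fst (snd p)$3"
  "fst (gu e0 e1 p) $ 3 = e1*(fst (snd p)$2 + snd (snd p)$1)"
  "fst (snd (gu e0 e1 p)) $ 1 = e0"
  "fst (snd (gu e0 e1 p)) $ 2 = e1*fst p$3"
  "fst (snd (gu e0 e1 p)) $ 3 = -e1*fst p$2"
  "snd (snd (gu e0 e1 p)) $ 1 = e1*fst p$3"
  "snd (snd (gu e0 e1 p)) $ 2 = -e0"
  "snd (snd (gu e0 e1 p)) $ 3 = -e1*fst p$1"
  by (simp_all add: gu_def axis_def)

lemma SS_c: "fst (SS p g) = cross3 (fst p) (fst g) + cross3 (fst (snd p)) (fst (snd g)) + cross3 (snd (snd p)) (snd (snd g))"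
  "fst (snd (SS p g)) = cross3 (fst (snd p)) (fst g)" "snd (snd (SS p g)) = cross3 (snd (snd p)) (fst g)"
  by (simp_all add: SS_def)

lemma Pb_eq: "gv e0 e1 (M,Al,Be) \<bullet> SS (M,Al,Be) (gu e0 e1 (M,Al,Be)) = (-1)*(M$3)*(Be$3)^2*e1^2 + (-1)*(M$3)*(Be$2)^2*e1^2 + (-1)*(M$3)*(Be$1)^2*e1^2 + (-1)*(M$3)*(Al$3)^2*e1^2 + (-2)*(M$3)*(Al$2)*(Be$1)*e1^2 + (-1)*(M$3)*(Al$2)^2*e1^2 + (2)*(M$3)*(Al$1)*(Be$2)*e1^2 + (-1)*(M$3)*(Al$1)^2*e1^2 + (1)*(M$2)*(Be$3)*e0 + (2)*(M$2)*(Al$3)*(Be$1)*e1^2 + (-2)*(M$2)*(Al$1)*(Be$3)*e1^2 + (1)*(M$2)^2*(Be$1)*e1 + (1/4)*(M$2)^2*(M$3) + (1)*(M$1)*(Al$3)*e0 + (-2)*(M$1)*(Al$3)*(Be$2)*e1^2 + (2)*(M$1)*(Al$2)*(Be$3)*e1^2 + (-1)*(M$1)*(M$2)*(Be$2)*e1 + (1)*(M$1)*(M$2)*(Al$1)*e1 + (-1)*(M$1)^2*(Al$2)*e1 + (1/4)*(M$1)^2*(M$3)"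
  unfolding inner_gv SS_c
  apply (simp only: vector_add_component cross_components gu_c fst_conv snd_conv)
  apply (simp add: algebra_simps power2_eq_square)
  done

lemma Nfun_eq: "Nfun e0 e1 0 (M,Al,Be) = complex_of_real (sqrt ((e0 - e1^2*((Al$1)+(Be$2)))^2 + (e1*(M$3) - e1^2*((Al$2)-(Be$1)))^2) + e1^2 * sqrt (((Al$1)-(Be$2))^2+((Al$2)+(Be$1))^2))"
proof -
  have 1: "Re ((of_real e0 + \<i> * of_real e1 * (cw3 0 (M,Al,Be) + \<i> * of_real e1 * cy1 (M,Al,Be)))
                      * (of_real e0 - \<i> * of_real e1 * (cw3 0 (M,Al,Be) - \<i> * of_real e1 * cy2 (M,Al,Be))))
        = (e0 - e1^2*((Al$1)+(Be$2)))^2 + (e1*(M$3) - e1^2*((Al$2)-(Be$1)))^2"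
    by (simp add: cw3_def cy1_def cy2_def power2_eq_square algebra_simps)
  have 2: "Re (cx1 (M,Al,Be) * cx2 (M,Al,Be)) = (((Al$1)-(Be$2))^2+((Al$2)+(Be$1))^2)"
    by (simp add: cx1_def cx2_def power2_eq_square algebra_simps)
  show ?thesis unfolding Nfun_def 1 2 by simp
qed

lemma Ffun_eq: "Ffun a b e1 0 (M,Al,Be) = complex_of_real (((-2)*(Be$1)*e1*(rsq a b) + (-2)*(Al$2)*e1*(rsq a b) + (1)*(M$3)*(Be$2)^2 + (1)*(M$3)*(Be$1)^2 + (2)*(M$3)*(Al$2)*(Be$1) + (1)*(M$3)*(Al$2)^2 + (-2)*(M$3)*(Al$1)*(Be$2) + (1)*(M$3)*(Al$1)^2 + (-1)*(M$2)*(Be$2)*(Be$3) + (-1)*(M$2)*(Al$3)*(Be$1) + (-1)*(M$2)*(Al$2)*(Al$3) + (1)*(M$2)*(Al$1)*(Be$3) + (-1)*(M$1)*(Be$1)*(Be$3) + (1)*(M$1)*(Al$3)*(Be$2) + (-1)*(M$1)*(Al$2)*(Be$3) + (-1)*(M$1)*(Al$1)*(Al$3)) / sqrt (((Al$1)-(Be$2))^2+((Al$2)+(Be$1))^2))"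
proof -
  have 2: "Re (cx1 (M,Al,Be) * cx2 (M,Al,Be)) = (((Al$1)-(Be$2))^2+((Al$2)+(Be$1))^2)"
    by (simp add: cx1_def cx2_def power2_eq_square algebra_simps)
  have ss: "sqrt (((Al$1)-(Be$2))^2+((Al$2)+(Be$1))^2) * sqrt (((Al$1)-(Be$2))^2+((Al$2)+(Be$1))^2) = (((Al$1)-(Be$2))^2+((Al$2)+(Be$1))^2)" by (simp add: add_nonneg_nonneg)
  show ?thesis
  proof (cases "sqrt (((Al$1)-(Be$2))^2+((Al$2)+(Be$1))^2) = 0")
    case True then show ?thesis unfolding Ffun_def Let_def 2 by simp
  next
    case False
    then show ?thesis
      unfolding Ffun_def Let_def 2
      using ss by (simp add: complex_eq_iff cx1_def cx2_def cz1_def cz2_def cw1_def cw2_def cw3_def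
         field_simps power2_eq_square)
  qed
qed

theorem theorem4:
  fixes a b \<epsilon>0 \<epsilon>1 :: real and x :: phase
  assumes "a > b" and "b > 0" and "\<epsilon>0 \<ge> 0"
    and "x \<in> M1set a b \<epsilon>0 \<epsilon>1 0"
  shows "complex_of_real (Cinv (Kfun a b \<epsilon>0 \<epsilon>1 0) x)
           = - 4 * (Nfun \<epsilon>0 \<epsilon>1 0 x)\<^sup>2 * (Ffun a b \<epsilon>1 0 x)\<^sup>2
     \<and> (Nfun \<epsilon>0 \<epsilon>1 0 x * Ffun a b \<epsilon>1 0 x \<noteq> 0 \<longrightarrow> outer_center (Kfun a b \<epsilon>0 \<epsilon>1 0) x)
     \<and> (Nfun \<epsilon>0 \<epsilon>1 0 x * Ffun a b \<epsilon>1 0 x = 0 \<longrightarrow> outer_degenerate (Kfun a b \<epsilon>0 \<epsilon>1 0) x)"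
proof -
  obtain M Al Be where x: "x = (M, Al, Be)" by (cases x)
  have P6: "x \<in> P6 a b" and X1: "xi1 a b \<epsilon>0 \<epsilon>1 0 x = 0"
    using assms(4) unfolding M1set_def by auto
  have hA: "Al \<bullet> Al = a^2" "Be \<bullet> Be = b^2" "Al \<bullet> Be = 0" using P6 unfolding x P6_def by auto
  have u0: "uu \<epsilon>0 \<epsilon>1 (rsq a b) x = 0" and v0: "vv \<epsilon>0 \<epsilon>1 x = 0"
    using X1 unfolding xi1_eq by (auto simp: complex_eq_iff)
  define Pb where "Pb = gv \<epsilon>0 \<epsilon>1 x \<bullet> SS x (gu \<epsilon>0 \<epsilon>1 x)"
  have z1: "gu \<epsilon>0 \<epsilon>1 x \<bullet> SS x (gu \<epsilon>0 \<epsilon>1 x) = 0"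
    using SS_antisym[of "gu \<epsilon>0 \<epsilon>1 x" x "gu \<epsilon>0 \<epsilon>1 x"] by linarith
  have z2: "gv \<epsilon>0 \<epsilon>1 x \<bullet> SS x (gv \<epsilon>0 \<epsilon>1 x) = 0"
    using SS_antisym[of "gv \<epsilon>0 \<epsilon>1 x" x "gv \<epsilon>0 \<epsilon>1 x"] by linarith
  have z3: "gu \<epsilon>0 \<epsilon>1 x \<bullet> SS x (gv \<epsilon>0 \<epsilon>1 x) = - Pb"
    using SS_antisym[of "gu \<epsilon>0 \<epsilon>1 x" x "gv \<epsilon>0 \<epsilon>1 x"] unfolding Pb_def by linarith
  have C: "Cinv (Kfun a b \<epsilon>0 \<epsilon>1 0) x = -4 * Pb^2"
    unfolding Cinv_def linz_K[OF u0 v0] trace_rank2 z1 z2 z3 Pb_def[symmetric]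
    by (simp add: power2_eq_square)
  have rs: "rsq a b = ((Al$1)^2+(Al$2)^2+(Al$3)^2-(Be$1)^2-(Be$2)^2-(Be$3)^2)"
    using hA unfolding rsq_def by (simp add: inner_vec_def sum_3 power2_eq_square)
  have hu: "(1/4)*((M$1)^2 - (M$2)^2) + \<epsilon>0*((Al$1)-(Be$2)) + \<epsilon>1*(M$3)*((Al$2)+(Be$1)) - \<epsilon>1*((Al$3)*(M$2) + (Be$3)*(M$1)) - \<epsilon>1^2*((Al$1)^2+(Al$2)^2+(Al$3)^2-(Be$1)^2-(Be$2)^2-(Be$3)^2) = 0" using u0 unfolding x uu_def rs by simp
  have hv: "(1/2)*((M$1)*(M$2)) + \<epsilon>0*((Al$2)+(Be$1)) - \<epsilon>1*(M$3)*((Al$1)-(Be$2)) + \<epsilon>1*((Al$3)*(M$1) - (Be$3)*(M$2)) = 0" using v0 unfolding x vv_def by simp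
  have hab: "((Al$1)*(Be$1)+(Al$2)*(Be$2)+(Al$3)*(Be$3)) = 0" using hA(3) by (simp add: inner_vec_def sum_3)
  have K: "(-1)*(M$3)*(Be$3)^2*\<epsilon>1^2 + (-1)*(M$3)*(Be$2)^2*\<epsilon>1^2 + (-1)*(M$3)*(Be$1)^2*\<epsilon>1^2 + (-1)*(M$3)*(Al$3)^2*\<epsilon>1^2 + (-2)*(M$3)*(Al$2)*(Be$1)*\<epsilon>1^2 + (-1)*(M$3)*(Al$2)^2*\<epsilon>1^2 + (2)*(M$3)*(Al$1)*(Be$2)*\<epsilon>1^2 + (-1)*(M$3)*(Al$1)^2*\<epsilon>1^2 + (1)*(M$2)*(Be$3)*\<epsilon>0 + (2)*(M$2)*(Al$3)*(Be$1)*\<epsilon>1^2 + (-2)*(M$2)*(Al$1)*(Be$3)*\<epsilon>1^2 + (1)*(M$2)^2*(Be$1)*\<epsilon>1 + (1/4)*(M$2)^2*(M$3) + (1)*(M$1)*(Al$3)*\<epsilon>0 + (-2)*(M$1)*(Al$3)*(Be$2)*\<epsilon>1^2 + (2)*(M$1)*(Al$2)*(Be$3)*\<epsilon>1^2 + (-1)*(M$1)*(M$2)*(Be$2)*\<epsilon>1 + (1)*(M$1)*(M$2)*(Al$1)*\<epsilon>1 + (-1)*(M$1)^2*(Al$2)*\<epsilon>1 + (1/4)*(M$1)^2*(M$3) = (sqrt ((\<epsilon>0 - \<epsilon>1^2*((Al$1)+(Be$2)))^2 + (\<epsilon>1*(M$3) - \<epsilon>1^2*((Al$2)-(Be$1)))^2)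 + \<epsilon>1^2 * sqrt (((Al$1)-(Be$2))^2+((Al$2)+(Be$1))^2)) * (((2)*(Be$1)*(Be$3)^2*\<epsilon>1 + (2)*(Be$1)*(Be$2)^2*\<epsilon>1 + (2)*(Be$1)^3*\<epsilon>1 + (-2)*(Al$3)^2*(Be$1)*\<epsilon>1 + (2)*(Al$2)*(Be$3)^2*\<epsilon>1 + (2)*(Al$2)*(Be$2)^2*\<epsilon>1 + (2)*(Al$2)*(Be$1)^2*\<epsilon>1 + (-2)*(Al$2)*(Al$3)^2*\<epsilon>1 + (-2)*(Al$2)^2*(Be$1)*\<epsilon>1 + (-2)*(Al$2)^3*\<epsilon>1 + (-2)*(Al$1)^2*(Be$1)*\<epsilon>1 + (-2)*(Al$1)^2*(Al$2)*\<epsilon>1 + (1)*(M$3)*(Be$2)^2 + (1)*(M$3)*(Be$1)^2 + (2)*(M$3)*(Al$2)*(Be$1) + (1)*(M$3)*(Al$2)^2 + (-2)*(M$3)*(Al$1)*(Be$2) + (1)*(M$3)*(Al$1)^2 + (-1)*(M$2)*(Be$2)*(Be$3) + (-1)*(M$2)*(Al$3)*(Be$1) + (-1)*(M$2)*(Al$2)*(Al$3) + (1)*(M$2)*(Al$1)*(Be$3) + (-1)*(M$1)*(Be$1)*(Be$3) + (1)*(M$1)*(Al$3)*(Be$2) + (-1)*(M$1)*(Al$2)*(Be$3) + (-1)*(M$1)*(Al$1)*(Al$3)) / sqrt (((Al$1)-(Be$2))^2+((Al$2)+(Be$1))^2))"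
    by (rule key_alg[where ?m1.0="M$1" and ?m2.0="M$2" and ?m3.0="M$3" and ?a1.0="Al$1" and ?a2.0="Al$2" and ?a3.0="Al$3" and ?b1.0="Be$1" and ?b2.0="Be$2" and ?b3.0="Be$3" and ?e0.0="\<epsilon>0" and ?e1.0="\<epsilon>1", OF hu hv hab])
  have GG: "(((-2)*(Be$1)*\<epsilon>1*(rsq a b) + (-2)*(Al$2)*\<epsilon>1*(rsq a b) + (1)*(M$3)*(Be$2)^2 + (1)*(M$3)*(Be$1)^2 + (2)*(M$3)*(Al$2)*(Be$1) + (1)*(M$3)*(Al$2)^2 + (-2)*(M$3)*(Al$1)*(Be$2) + (1)*(M$3)*(Al$1)^2 + (-1)*(M$2)*(Be$2)*(Be$3) + (-1)*(M$2)*(Al$3)*(Be$1) + (-1)*(M$2)*(Al$2)*(Al$3) + (1)*(M$2)*(Al$1)*(Be$3) + (-1)*(M$1)*(Be$1)*(Be$3) + (1)*(M$1)*(Al$3)*(Be$2) + (-1)*(M$1)*(Al$2)*(Be$3) + (-1)*(M$1)*(Al$1)*(Al$3)) / sqrt (((Al$1)-(Be$2))^2+((Al$2)+(Be$1))^2)) = (((2)*(Be$1)*(Be$3)^2*\<epsilon>1 + (2)*(Be$1)*(Be$2)^2*\<epsilon>1 + (2)*(Be$1)^3*\<epsilon>1 + (-2)*(Al$3)^2*(Be$1)*\<epsilon>1 + (2)*(Al$2)*(Be$3)^2*\<epsilon>1 + (2)*(Al$2)*(Be$2)^2*\<epsilon>1 + (2)*(Al$2)*(Be$1)^2*\<epsilon>1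 + (-2)*(Al$2)*(Al$3)^2*\<epsilon>1 + (-2)*(Al$2)^2*(Be$1)*\<epsilon>1 + (-2)*(Al$2)^3*\<epsilon>1 + (-2)*(Al$1)^2*(Be$1)*\<epsilon>1 + (-2)*(Al$1)^2*(Al$2)*\<epsilon>1 + (1)*(M$3)*(Be$2)^2 + (1)*(M$3)*(Be$1)^2 + (2)*(M$3)*(Al$2)*(Be$1) + (1)*(M$3)*(Al$2)^2 + (-2)*(M$3)*(Al$1)*(Be$2) + (1)*(M$3)*(Al$1)^2 + (-1)*(M$2)*(Be$2)*(Be$3) + (-1)*(M$2)*(Al$3)*(Be$1) + (-1)*(M$2)*(Al$2)*(Al$3) + (1)*(M$2)*(Al$1)*(Be$3) + (-1)*(M$1)*(Be$1)*(Be$3) + (1)*(M$1)*(Al$3)*(Be$2) + (-1)*(M$1)*(Al$2)*(Be$3) + (-1)*(M$1)*(Al$1)*(Al$3)) / sqrt (((Al$1)-(Be$2))^2+((Al$2)+(Be$1))^2))" unfolding rs by algebra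
  have PbE: "Pb = (sqrt ((\<epsilon>0 - \<epsilon>1^2*((Al$1)+(Be$2)))^2 + (\<epsilon>1*(M$3) - \<epsilon>1^2*((Al$2)-(Be$1)))^2) + \<epsilon>1^2 * sqrt (((Al$1)-(Be$2))^2+((Al$2)+(Be$1))^2)) * (((-2)*(Be$1)*\<epsilon>1*(rsq a b) + (-2)*(Al$2)*\<epsilon>1*(rsq a b) + (1)*(M$3)*(Be$2)^2 + (1)*(M$3)*(Be$1)^2 + (2)*(M$3)*(Al$2)*(Be$1) + (1)*(M$3)*(Al$2)^2 + (-2)*(M$3)*(Al$1)*(Be$2) + (1)*(M$3)*(Al$1)^2 + (-1)*(M$2)*(Be$2)*(Be$3) + (-1)*(M$2)*(Al$3)*(Be$1) + (-1)*(M$2)*(Al$2)*(Al$3) + (1)*(M$2)*(Al$1)*(Be$3) + (-1)*(M$1)*(Be$1)*(Be$3) + (1)*(M$1)*(Al$3)*(Be$2) + (-1)*(M$1)*(Al$2)*(Be$3) + (-1)*(M$1)*(Al$1)*(Al$3)) / sqrt (((Al$1)-(Be$2))^2+((Al$2)+(Be$1))^2))"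
    unfolding Pb_def x Pb_eq K GG ..
  have NE: "Nfun \<epsilon>0 \<epsilon>1 0 x = complex_of_real (sqrt ((\<epsilon>0 - \<epsilon>1^2*((Al$1)+(Be$2)))^2 + (\<epsilon>1*(M$3) - \<epsilon>1^2*((Al$2)-(Be$1)))^2) + \<epsilon>1^2 * sqrt (((Al$1)-(Be$2))^2+((Al$2)+(Be$1))^2))" unfolding x Nfun_eq ..
  have FE: "Ffun a b \<epsilon>1 0 x = complex_of_real (((-2)*(Be$1)*\<epsilon>1*(rsq a b) + (-2)*(Al$2)*\<epsilon>1*(rsq a b) + (1)*(M$3)*(Be$2)^2 + (1)*(M$3)*(Be$1)^2 + (2)*(M$3)*(Al$2)*(Be$1) + (1)*(M$3)*(Al$2)^2 + (-2)*(M$3)*(Al$1)*(Be$2) + (1)*(M$3)*(Al$1)^2 + (-1)*(M$2)*(Be$2)*(Be$3) + (-1)*(M$2)*(Al$3)*(Be$1) + (-1)*(M$2)*(Al$2)*(Al$3) + (1)*(M$2)*(Al$1)*(Be$3) + (-1)*(M$1)*(Be$1)*(Be$3) + (1)*(M$1)*(Al$3)*(Be$2) + (-1)*(M$1)*(Al$2)*(Be$3) + (-1)*(M$1)*(Al$1)*(Al$3)) / sqrt (((Al$1)-(Be$2))^2+((Al$2)+(Be$1))^2))" unfolding x Ffun_eq ..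
  have NF: "Nfun \<epsilon>0 \<epsilon>1 0 x * Ffun a b \<epsilon>1 0 x = complex_of_real Pb"
    unfolding NE FE PbE by simp
  have gen: "\<And>n f::real. complex_of_real (-4*(n*f)^2) = -4 * (complex_of_real n)^2 * (complex_of_real f)^2"
    by (simp add: power_mult_distrib)
  have part1: "complex_of_real (Cinv (Kfun a b \<epsilon>0 \<epsilon>1 0) x)
           = - 4 * (Nfun \<epsilon>0 \<epsilon>1 0 x)\<^sup>2 * (Ffun a b \<epsilon>1 0 x)\<^sup>2"
    unfolding C NE FE PbE by (rule gen)
  show ?thesis
  proof (intro conjI impI)
    show "complex_of_real (Cinv (Kfun a b \<epsilon>0 \<epsilon>1 0) x)
           = - 4 * (Nfun \<epsilon>0 \<epsilon>1 0 x)\<^sup>2 * (Ffun a b \<epsilon>1 0 x)\<^sup>2" by (rule part1)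
  next
    assume "Nfun \<epsilon>0 \<epsilon>1 0 x * Ffun a b \<epsilon>1 0 x \<noteq> 0"
    then have "Pb \<noteq> 0" unfolding NF by simp
    then show "outer_center (Kfun a b \<epsilon>0 \<epsilon>1 0) x" unfolding outer_center_def C by simp
  next
    assume "Nfun \<epsilon>0 \<epsilon>1 0 x * Ffun a b \<epsilon>1 0 x = 0"
    then have "Pb = 0" unfolding NF by simp
    then show "outer_degenerate (Kfun a b \<epsilon>0 \<epsilon>1 0) x" unfolding outer_degenerate_def C by simp
  qed
qed

end
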